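(* Let $0<q<1$, $q^*=2-q$, and let $X_1$ be a real random variable. Define $\theta(a)=\left[\mathbb{E}\exp_{q^*}(aX_1)\right]^{1-q}a$. Then $\theta$ is a strictly increasing function of $a$ on the open interval of values $a$ for which $0<\mathbb{E}\exp_{q^*}(aX_1)<+\infty$.
   Context: For $q\in(0,2)$, $q\ne1$, the $q$-deformed exponential is $\exp_q(u)=[1+(1-q)u]_+^{1/(1-q)}$ for real $u$ (value in $[0,+\infty]$), where $[u]_+=\max(u,0)$. *)

theory Defs
  imports "HOL-Probability.Probability"
begin

definition qexp :: "real \<Rightarrow> real \<Rightarrow> ennreal" where
  "qexp q u = (if 1 + (1 - q) * u > 0
               then ennreal ((1 + (1 - q) * u) powr (1 / (1 - q)))
               else if 1 / (1 - q) > 0 then 0 else \<infinity>)"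

end

theory Submission imports Defs begin

lemma qexp_meas[measurable]:
  assumes [measurable]: "f \<in> borel_measurable M"
  shows "(\<lambda>x. qexp r (f x)) \<in> borel_measurable M"
  unfolding qexp_def by measurable

lemma qexp_pos: "0 < p \<Longrightarrow> 1 - p * u > 0 \<Longrightarrow> qexp (2 - (1 - p)) u = ennreal ((1 - p*u) powr (-1/p))"
  unfolding qexp_def by (auto simp: algebra_simps divide_simps)

lemma qexp_nonpos: "0 < p \<Longrightarrow> \<not> 1 - p * u > 0 \<Longrightarrow> qexp (2 - (1 - p)) u = \<infinity>"
  unfolding qexp_def by (auto simp: algebra_simps divide_simps)

lemma key:
  fixes M :: "'a measure" and X :: "'a \<Rightarrow> real"
  assumes P: "prob_space M" and Xm[measurable]: "X \<in> borel_measurable M"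
    and p: "0 < p"
    and Fa: "(\<integral>\<^sup>+ x. qexp (2 - (1-p)) (a * X x) \<partial>M) < \<infinity>"
    and Fb: "(\<integral>\<^sup>+ x. qexp (2 - (1-p)) (b * X x) \<partial>M) < \<infinity>"
    and st: "s > 0" "t > 0"
    and cmp: "\<And>x. 1 - p*(a * X x) > 0 \<Longrightarrow> 1 - p*(b * X x) > 0 \<Longrightarrow>
                  (1 - p*(b * X x)) / t < (1 - p*(a * X x)) / s"
  shows "ennreal (s powr (1/p)) * (\<integral>\<^sup>+ x. qexp (2 - (1-p)) (a * X x) \<partial>M)
       < ennreal (t powr (1/p)) * (\<integral>\<^sup>+ x. qexp (2 - (1-p)) (b * X x) \<partial>M)"
proof -
  interpret prob_space M by fact
  let ?G = "\<lambda>c x. qexp (2 - (1-p)) (c * X x)"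
  have AEa: "AE x in M. ?G a x \<noteq> \<infinity>"
    by (rule nn_integral_PInf_AE) (use Fa in auto)
  have AEb: "AE x in M. ?G b x \<noteq> \<infinity>"
    by (rule nn_integral_PInf_AE) (use Fb in auto)
  have pt: "AE x in M. ennreal (s powr (1/p)) * ?G a x < ennreal (t powr (1/p)) * ?G b x"
    using AEa AEb
  proof eventually_elim
    case (elim x)
    have ya: "1 - p*(a * X x) > 0" using elim qexp_nonpos[OF p] by metis
    have yb: "1 - p*(b * X x) > 0" using elim qexp_nonpos[OF p] by metis
    have c: "(1 - p*(b * X x)) / t < (1 - p*(a * X x)) / s" using cmp ya yb by auto
    have e1: "s powr (1/p) * (1 - p*(a * X x)) powr (-1/p) = ((1 - p*(a * X x)) / s) powr (-1/p)"
      using st ya by (simp add: powr_divide powr_minus_divide divide_simps powr_minus)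
    have e2: "t powr (1/p) * (1 - p*(b * X x)) powr (-1/p) = ((1 - p*(b * X x)) / t) powr (-1/p)"
      using st yb by (simp add: powr_divide powr_minus_divide divide_simps powr_minus)
    have "((1 - p*(a * X x)) / s) powr (-1/p) < ((1 - p*(b * X x)) / t) powr (-1/p)"
      by (rule powr_less_mono2_neg) (use p st yb c in auto)
    hence "s powr (1/p) * (1 - p*(a * X x)) powr (-1/p) < t powr (1/p) * (1 - p*(b * X x)) powr (-1/p)"
      using e1 e2 by simp
    thus ?case using qexp_pos[OF p ya] qexp_pos[OF p yb]
      by (simp add: ennreal_mult'[symmetric] ennreal_less_iff)
  qed
  have "(\<integral>\<^sup>+ x. ennreal (s powr (1/p)) * ?G a x \<partial>M) < (\<integral>\<^sup>+ x. ennreal (t powr (1/p)) * ?G b x \<partial>M)"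
  proof (rule nn_integral_less)
    show "(\<integral>\<^sup>+ x. ennreal (s powr (1/p)) * ?G a x \<partial>M) \<noteq> \<infinity>"
      using Fa by (simp add: nn_integral_cmult ennreal_mult_eq_top_iff)
    show "AE x in M. ennreal (s powr (1/p)) * ?G a x \<le> ennreal (t powr (1/p)) * ?G b x"
      using pt by eventually_elim simp
    show "\<not> (AE x in M. ennreal (t powr (1/p)) * ?G b x \<le> ennreal (s powr (1/p)) * ?G a x)"
    proof
      assume "AE x in M. ennreal (t powr (1/p)) * ?G b x \<le> ennreal (s powr (1/p)) * ?G a x"
      with pt have "AE x in M. False" by eventually_elim auto
      thus False by simp
    qed
  qed auto
  thus ?thesis by (simp add: nn_integral_cmult)
qed


theorem lemma1:
  fixes M :: "'a measure" and X :: "'a \<Rightarrow> real" and q :: real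
  assumes "prob_space M"
    and "X \<in> borel_measurable M"
    and "0 < q" and "q < 1"
  shows "strict_mono_on
           {a. 0 < (\<integral>\<^sup>+ x. qexp (2 - q) (a * X x) \<partial>M) \<and> (\<integral>\<^sup>+ x. qexp (2 - q) (a * X x) \<partial>M) < \<infinity>}
           (\<lambda>a. enn2real (\<integral>\<^sup>+ x. qexp (2 - q) (a * X x) \<partial>M) powr (1 - q) * a)"
proof (rule strict_mono_onI)
  define p where "p = 1 - q"
  have p: "0 < p" "p < 1" using assms by (auto simp: p_def)
  have qq: "q = 1 - p" by (simp add: p_def)
  define F where "F c = (\<integral>\<^sup>+ x. qexp (2 - (1-p)) (c * X x) \<partial>M)" for c
  fix a b assume A: "a \<in> {a. 0 < (\<integral>\<^sup>+ x. qexp (2 - q) (a * X x) \<partial>M) \<and> (\<integral>\<^sup>+ x. qexp (2 - q) (a * X x) \<partial>M) < \<infinity>}"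
    and B: "b \<in> {a. 0 < (\<integral>\<^sup>+ x. qexp (2 - q) (a * X x) \<partial>M) \<and> (\<integral>\<^sup>+ x. qexp (2 - q) (a * X x) \<partial>M) < \<infinity>}"
    and ab: "a < b"
  have Fa: "0 < F a" "F a < \<infinity>" and Fb: "0 < F b" "F b < \<infinity>"
    using A B unfolding F_def qq by auto
  define fa where "fa = enn2real (F a)"
  define fb where "fb = enn2real (F b)"
  have fa: "fa > 0" "F a = ennreal fa" using Fa unfolding fa_def
    by (auto simp: enn2real_positive_iff less_top) 
  have fb: "fb > 0" "F b = ennreal fb" using Fb unfolding fb_def
    by (auto simp: enn2real_positive_iff less_top)
  have goal: "fa powr p * a < fb powr p * b"
  proof (cases "a \<le> 0 \<and> 0 < b \<or> a < 0 \<and> 0 \<le> b")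
    case True
    have "fa powr p * a \<le> 0" "0 \<le> fb powr p * b" "fa powr p * a < 0 \<or> 0 < fb powr p * b"
      using True fa fb powr_gt_zero[of fa p] powr_gt_zero[of fb p]
      by (auto simp: mult_nonneg_nonpos mult_neg_pos mult_pos_pos mult_pos_neg)
    thus ?thesis by linarith
  next
    case False
    hence cs: "0 < a \<and> 0 < b \<or> a < 0 \<and> b < 0" using ab by linarith
    show ?thesis
    proof (cases "0 < a")
      case True
      have "ennreal (a powr (1/p)) * F a < ennreal (b powr (1/p)) * F b"
        unfolding F_def
      proof (rule key[OF assms(1,2) p(1)])
        show "(\<integral>\<^sup>+ x. qexp (2 - (1-p)) (a * X x) \<partial>M) < \<infinity>" using Fa F_def by simp
        show "(\<integral>\<^sup>+ x. qexp (2 - (1-p)) (b * X x) \<partial>M) < \<infinity>" using Fb F_def by simp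
        show "a > 0" "b > 0" using True ab by auto
        fix x
        have "(1 - p*(b * X x)) / b = 1/b - p * X x" using ab True by (simp add: field_simps)
        moreover have "(1 - p*(a * X x)) / a = 1/a - p * X x" using True by (simp add: field_simps)
        moreover have "1/b < 1/a" using True ab by (simp add: divide_strict_left_mono)
        ultimately show "(1 - p*(b * X x)) / b < (1 - p*(a * X x)) / a" by simp
      qed
      hence "a powr (1/p) * fa < b powr (1/p) * fb"
        using fa fb True ab by (simp add: ennreal_mult'[symmetric] ennreal_less_iff)
      hence "(a powr (1/p) * fa) powr p < (b powr (1/p) * fb) powr p"
        using fa fb True ab p by (intro powr_less_mono2) auto
      moreover have "(a powr (1/p) * fa) powr p = fa powr p * a"
        using fa True p by (simp add: powr_mult powr_powr)
      moreover have "(b powr (1/p) * fb) powr p = fb powr p * b"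
        using fb True ab p by (simp add: powr_mult powr_powr)
      ultimately show ?thesis by simp
    next
      case False
      hence neg: "a < 0" "b < 0" using cs by auto
      have "ennreal ((-b) powr (1/p)) * F b < ennreal ((-a) powr (1/p)) * F a"
        unfolding F_def
      proof (rule key[OF assms(1,2) p(1)])
        show "(\<integral>\<^sup>+ x. qexp (2 - (1-p)) (a * X x) \<partial>M) < \<infinity>" using Fa F_def by simp
        show "(\<integral>\<^sup>+ x. qexp (2 - (1-p)) (b * X x) \<partial>M) < \<infinity>" using Fb F_def by simp
        show "-a > 0" "-b > 0" using neg by auto
        fix x
        have "(1 - p*(a * X x)) / (-a) = 1/(-a) + p * X x" using neg by (simp add: field_simps)
        moreover have "(1 - p*(b * X x)) / (-b) = 1/(-b) + p * X x" using neg by (simp add: field_simps)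
        moreover have "1/(-a) < 1/(-b)" using neg ab by (simp add: divide_simps)
        ultimately show "(1 - p*(a * X x)) / (-a) < (1 - p*(b * X x)) / (-b)" by simp
      qed
      hence "(-b) powr (1/p) * fb < (-a) powr (1/p) * fa"
        using fa fb neg by (simp add: ennreal_mult'[symmetric] ennreal_less_iff)
      hence "((-b) powr (1/p) * fb) powr p < ((-a) powr (1/p) * fa) powr p"
        using fa fb neg p by (intro powr_less_mono2) auto
      moreover have "((-a) powr (1/p) * fa) powr p = fa powr p * (-a)"
        using fa neg p by (simp add: powr_mult powr_powr)
      moreover have "((-b) powr (1/p) * fb) powr p = fb powr p * (-b)"
        using fb neg p by (simp add: powr_mult powr_powr)
      ultimately show ?thesis by simp
    qed
  qed
  show "enn2real (\<integral>\<^sup>+ x. qexp (2 - q) (a * X x) \<partial>M) powr (1 - q) * a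
      < enn2real (\<integral>\<^sup>+ x. qexp (2 - q) (b * X x) \<partial>M) powr (1 - q) * b"
    using goal unfolding fa_def fb_def F_def qq by simp
qed

end
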